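(* Let $\mathscr{G}_1,\mathscr{G}_2$ be covariance operators on $L^2([0,1]^D)$ of finite ranks $K_1,K_2$ with real analytic eigenfunctions, and assume without loss of generality $K_1\ge K_2$. Let $\mathscr{B}_1,\mathscr{B}_2$ be covariance operators on $L^2([0,1]^D)$ with continuous kernels that are banded with bandwidths $\underline{\delta}_1,\underline{\delta}_2$ whose components all lie in $(0,1/2)$. Let $\underline{M}=(M_1,\dots,M_D)$ and suppose $$K_1\le K^*=\prod_{d=1}^D\Big\lfloor\Big(\tfrac12-\max\{\delta_{1,d},\delta_{2,d}\}\Big)M_d-1\Big\rfloor .$$ Then for Lebesgue-almost every grid in $\mathcal{S}_{\underline{M}}$, $$\mathcal{G}^{\underline{M}}_1+\mathcal{B}^{\underline{M}}_1=\mathcal{G}^{\underline{M}}_2+\mathcal{B}^{\underline{M}}_2\iff \mathcal{G}^{\underline{M}}_1=\mathcal{G}^{\underline{M}}_2\ \text{ and }\ \mathcal{B}^{\underline{M}}_1=\mathcal{B}^{\underline{M}}_2 .$$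
   Context: A covariance operator with kernel $b$ is $\underline{\delta}$-banded, $\underline{\delta}=(\delta_1,\dots,\delta_D)$, if $b(\underline{s}_1,\underline{s}_2)=0$ whenever $|s_{1,d}-s_{2,d}|\ge\delta_d$ for some $d$. A function is real analytic on $[0,1]^D$ if it is the restriction of a real analytic function on an open set containing $[0,1]^D$. For $\underline{M}$, $\mathbb{N}_{\underline{M}}=\{1,\dots,M_1\}\times\cdots\times\{1,\dots,M_D\}$; $[0,1]^D$ is partitioned into cells $I_{\underline{m},\underline{M}}=\prod_d[(m_d-1)/M_d,m_d/M_d)$, and $\mathcal{S}_{\underline{M}}$ is the set of grids $\{\underline{s}_{\underline{m}}\}_{\underline{m}\in\mathbb{N}_{\underline{M}}}$ with $\underline{s}_{\underline{m}}\in I_{\underline{m},\underline{M}}$, identified with $\prod_{\underline{m}}I_{\underline{m},\underline{M}}$ and carrying Lebesgue measure. For an operator with kernel $g$ (resp. $b$), $\mathcal{G}^{\underline{M}}$ (resp. $\mathcal{B}^{\underline{M}}$) is the tensor in $\mathbb{R}^{M_1\times\cdots\times M_D\times M_1\times\cdots\times M_D}$ with entries $g(\underline{s}_{\underline{i}},\underline{s}_{\underline{j}})$ (resp. $b(\underline{s}_{\underline{i}},\underline{s}_{\underline{j}})$), $\underline{i},\underline{j}\in\mathbb{N}_{\underline{M}}$. *)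

theory Defs
  imports "HOL-Analysis.Analysis"
begin

text \<open>Points of [0,1]^D are vectors of type real^'d, the finite type 'd indexing the D coordinates.\<close>

definition unit_cube :: "(real^'d) set" where
  "unit_cube = {s. \<forall>d. 0 \<le> s$d \<and> s$d \<le> 1}"

text \<open>Real analyticity of f : real^'d \<Rightarrow> real on an open set U: locally around every point
  it is the (unconditionally, hence absolutely, convergent) sum of its multivariate power series.\<close>

definition real_analytic_on :: "(real^'d) set \<Rightarrow> (real^'d \<Rightarrow> real) \<Rightarrow> bool" where
  "real_analytic_on U f \<longleftrightarrow>
     (\<forall>x\<in>U. \<exists>r>0. \<exists>c :: ('d \<Rightarrow> nat) \<Rightarrow> real.
        \<forall>y\<in>ball x r. ((\<lambda>\<alpha>. c \<alpha> * (\<Prod>d\<in>UNIV. (y$d - x$d) ^ \<alpha> d)) has_sum f y) UNIV)"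

definition real_analytic_on_cube :: "(real^'d \<Rightarrow> real) \<Rightarrow> bool" where
  "real_analytic_on_cube f \<longleftrightarrow>
     (\<exists>U F. open U \<and> unit_cube \<subseteq> U \<and> real_analytic_on U F \<and> (\<forall>s\<in>unit_cube. F s = f s))"

text \<open>Kernel of a finite-rank-K covariance operator on L^2([0,1]^D) with real analytic
  eigenfunctions: g(s,t) = sum_k lam_k phi_k(s) phi_k(t), lam_k > 0, phi_k orthonormal.\<close>

definition finite_rank_analytic_cov :: "(real^'d \<Rightarrow> real^'d \<Rightarrow> real) \<Rightarrow> nat \<Rightarrow> bool" where
  "finite_rank_analytic_cov g K \<longleftrightarrow>
     (\<exists>(lam :: nat \<Rightarrow> real) (phi :: nat \<Rightarrow> real^'d \<Rightarrow> real).
        (\<forall>k<K. lam k > 0) \<and>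
        (\<forall>k<K. real_analytic_on_cube (phi k)) \<and>
        (\<forall>j<K. \<forall>k<K. (LINT s:unit_cube|lborel. phi j s * phi k s) = (if j = k then 1 else 0)) \<and>
        (\<forall>s\<in>unit_cube. \<forall>t\<in>unit_cube. g s t = (\<Sum>k<K. lam k * phi k s * phi k t)))"

definition cov_kernel :: "(real^'d \<Rightarrow> real^'d \<Rightarrow> real) \<Rightarrow> bool" where
  "cov_kernel b \<longleftrightarrow>
     (\<forall>s\<in>unit_cube. \<forall>t\<in>unit_cube. b s t = b t s) \<and>
     (\<forall>f :: real^'d \<Rightarrow> real. f \<in> borel_measurable lborel \<longrightarrow>
        set_integrable lborel unit_cube (\<lambda>s. (f s)\<^sup>2) \<longrightarrow>
        (LINT s:unit_cube|lborel. (LINT t:unit_cube|lborel. f s * b s t * f t)) \<ge> 0)"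

definition continuous_kernel :: "(real^'d \<Rightarrow> real^'d \<Rightarrow> real) \<Rightarrow> bool" where
  "continuous_kernel b \<longleftrightarrow> continuous_on (unit_cube \<times> unit_cube) (\<lambda>(s,t). b s t)"

definition banded :: "('d \<Rightarrow> real) \<Rightarrow> (real^'d \<Rightarrow> real^'d \<Rightarrow> real) \<Rightarrow> bool" where
  "banded \<delta> b \<longleftrightarrow>
     (\<forall>s\<in>unit_cube. \<forall>t\<in>unit_cube. (\<exists>d. \<bar>s$d - t$d\<bar> \<ge> \<delta> d) \<longrightarrow> b s t = 0)"

definition idx :: "('d::finite \<Rightarrow> nat) \<Rightarrow> ('d \<Rightarrow> nat) set" where
  "idx M = PiE UNIV (\<lambda>d. {1..M d})"

definition cell :: "('d \<Rightarrow> nat) \<Rightarrow> ('d \<Rightarrow> nat) \<Rightarrow> (real^'d) set" where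
  "cell M m = {s. \<forall>d. (real (m d) - 1) / real (M d) \<le> s$d \<and> s$d < real (m d) / real (M d)}"

definition grids :: "('d::finite \<Rightarrow> nat) \<Rightarrow> (('d \<Rightarrow> nat) \<Rightarrow> real^'d) set" where
  "grids M = {s. \<forall>m\<in>idx M. s m \<in> cell M m}"

definition grid_measure :: "('d::finite \<Rightarrow> nat) \<Rightarrow> (('d \<Rightarrow> nat) \<Rightarrow> real^'d) measure" where
  "grid_measure M = PiM (idx M) (\<lambda>_. lborel)"

definition kernel_tensor ::
  "('d::finite \<Rightarrow> nat) \<Rightarrow> (real^'d \<Rightarrow> real^'d \<Rightarrow> real) \<Rightarrow> (('d \<Rightarrow> nat) \<Rightarrow> real^'d)
     \<Rightarrow> ('d \<Rightarrow> nat) \<times> ('d \<Rightarrow> nat) \<Rightarrow> real" where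
  "kernel_tensor M k s = (\<lambda>(i,j). if i \<in> idx M \<and> j \<in> idx M then k (s i) (s j) else 0)"

text \<open>K* = prod_d floor((1/2 - max(delta_1d, delta_2d)) M_d - 1), negative factors read as 0.\<close>

definition Kstar :: "('d::finite \<Rightarrow> nat) \<Rightarrow> ('d \<Rightarrow> real) \<Rightarrow> ('d \<Rightarrow> real) \<Rightarrow> nat" where
  "Kstar M \<delta>1 \<delta>2 = (\<Prod>d\<in>UNIV. nat \<lfloor>(1/2 - max (\<delta>1 d) (\<delta>2 d)) * real (M d) - 1\<rfloor>)"

end

theory Submission
  imports Defs
begin

definition ra1 :: "real set \<Rightarrow> (real \<Rightarrow> real) \<Rightarrow> bool" where
  "ra1 J f \<longleftrightarrow> (\<forall>x\<in>J. \<exists>r>0. \<exists>c::nat\<Rightarrow>real. \<forall>y. \<bar>y - x\<bar> < r \<longrightarrow> (\<lambda>n. c n * (y - x)^n) sums f y)"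

lemma ra1_add: "ra1 J f \<Longrightarrow> ra1 J g \<Longrightarrow> ra1 J (\<lambda>x. f x + g x)"
  unfolding ra1_def
proof (intro ballI)
  fix x assume f: "\<forall>x\<in>J. \<exists>r>0. \<exists>c. \<forall>y. \<bar>y - x\<bar> < r \<longrightarrow> (\<lambda>n. c n * (y - x) ^ n) sums f y"
    and g: "\<forall>x\<in>J. \<exists>r>0. \<exists>c. \<forall>y. \<bar>y - x\<bar> < r \<longrightarrow> (\<lambda>n. c n * (y - x) ^ n) sums g y" and x: "x \<in> J"
  obtain r1 c1 where r1: "r1 > 0" "\<forall>y. \<bar>y - x\<bar> < r1 \<longrightarrow> (\<lambda>n. c1 n * (y - x) ^ n) sums f y" using f x by blast
  obtain r2 c2 where r2: "r2 > 0" "\<forall>y. \<bar>y - x\<bar> < r2 \<longrightarrow> (\<lambda>n. c2 n * (y - x) ^ n) sums g y" using g x by blast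
  show "\<exists>r>0. \<exists>c. \<forall>y. \<bar>y - x\<bar> < r \<longrightarrow> (\<lambda>n. c n * (y - x) ^ n) sums (f y + g y)"
  proof (intro exI conjI allI impI)
    show "min r1 r2 > 0" using r1 r2 by simp
    fix y assume "\<bar>y - x\<bar> < min r1 r2"
    then have "(\<lambda>n. c1 n * (y - x) ^ n + c2 n * (y - x) ^ n) sums (f y + g y)"
      using r1 r2 by (intro sums_add) auto
    then show "(\<lambda>n. (\<lambda>n. c1 n + c2 n) n * (y - x) ^ n) sums (f y + g y)"
      by (simp add: distrib_right)
  qed
qed

lemma ra1_cmult: "ra1 J f \<Longrightarrow> ra1 J (\<lambda>x. a * f x)"
  unfolding ra1_def
proof (intro ballI)
  fix x assume f: "\<forall>x\<in>J. \<exists>r>0. \<exists>c. \<forall>y. \<bar>y - x\<bar> < r \<longrightarrow> (\<lambda>n. c n * (y - x) ^ n) sums f y" and x: "x \<in> J"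
  obtain r1 c1 where r1: "r1 > 0" "\<forall>y. \<bar>y - x\<bar> < r1 \<longrightarrow> (\<lambda>n. c1 n * (y - x) ^ n) sums f y" using f x by blast
  show "\<exists>r>0. \<exists>c. \<forall>y. \<bar>y - x\<bar> < r \<longrightarrow> (\<lambda>n. c n * (y - x) ^ n) sums (a * f y)"
  proof (intro exI conjI allI impI)
    show "r1 > 0" by fact
    fix y assume "\<bar>y - x\<bar> < r1"
    then have "(\<lambda>n. a * (c1 n * (y - x) ^ n)) sums (a * f y)"
      using r1 by (intro sums_mult) auto
    then show "(\<lambda>n. (\<lambda>n. a * c1 n) n * (y - x) ^ n) sums (a * f y)"
      by (simp add: mult.assoc)
  qed
qed

lemma ra1_zero: "ra1 J (\<lambda>x. 0)"
  unfolding ra1_def by (auto intro!: exI[of _ 1] exI[of _ "\<lambda>_. 0"])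

lemma ra1_mono: "ra1 J f \<Longrightarrow> J' \<subseteq> J \<Longrightarrow> ra1 J' f"
  unfolding ra1_def by blast

lemma ra1_sum: "finite A \<Longrightarrow> (\<And>k. k \<in> A \<Longrightarrow> ra1 J (f k)) \<Longrightarrow> ra1 J (\<lambda>x. \<Sum>k\<in>A. f k x)"
  by (induction A rule: finite_induct) (auto intro: ra1_add ra1_zero)

lemma ra1_diff: "ra1 J f \<Longrightarrow> ra1 J g \<Longrightarrow> ra1 J (\<lambda>x. f x - g x)"
  using ra1_add[of J f "\<lambda>x. (-1) * g x"] ra1_cmult[of J g "-1"] by simp

lemma ra1_local:
  assumes "ra1 J f" "p \<in> J" "p islimpt {y. f y = 0}"
  shows "\<exists>e>0. \<forall>y. \<bar>y - p\<bar> < e \<longrightarrow> f y = 0"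
proof -
  obtain r c where r: "r > 0" and S: "\<And>y. \<bar>y - p\<bar> < r \<Longrightarrow> (\<lambda>n. c n * (y - p)^n) sums f y"
    using assms(1,2) unfolding ra1_def by blast
  have summ: "summable (\<lambda>n. c n * (r/2)^n)"
    using S[of "p + r/2"] r by (auto simp: sums_iff)
  have allz: "c m = 0" for m
  proof (induction m rule: less_induct)
    case (less m)
    define g where "g w = (\<Sum>n. c (n + m) * w^n)" for w
    have sg: "summable (\<lambda>n. c (n + m) * (r/2)^n)"
      using summ by (subst summable_powser_ignore_initial_segment)
    have cont: "isCont g 0" unfolding g_def
      by (rule isCont_powser[OF sg]) (use r in simp)
    have g0: "g 0 = c m"
      unfolding g_def using powser_zero[of "\<lambda>n. c (n+m)"] by simp
    have fg: "f (p + w) = w^m * g w" if "\<bar>w\<bar> < r" for w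
    proof -
      have s1: "(\<lambda>n. c n * w^n) sums f (p + w)" using S[of "p+w"] that by simp
      have "(\<lambda>n. c (n + m) * w^(n + m)) sums f (p + w)"
      proof -
        have "(\<lambda>n. c (n + m) * w^(n + m)) sums (f (p + w) - (\<Sum>n<m. c n * w^n))"
          using sums_iff_shift[of "\<lambda>n. c n * w^n" m] s1 by simp
        moreover have "(\<Sum>n<m. c n * w^n) = 0" using less by simp
        ultimately show ?thesis by simp
      qed
      then have "(\<lambda>n. w^m * (c (n + m) * w^n)) sums f (p + w)"
        by (simp add: power_add mult_ac)
      moreover have "summable (\<lambda>n. c (n + m) * w^n)"
        using s1 by (metis summable_powser_ignore_initial_segment sums_summable)
      then have "(\<lambda>n. w^m * (c (n + m) * w^n)) sums (w^m * g w)"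
        unfolding g_def by (intro sums_mult summable_sums)
      ultimately show ?thesis using sums_unique2 by blast
    qed
    show "c m = 0"
    proof (rule ccontr)
      assume "c m \<noteq> 0"
      then have "g 0 \<noteq> 0" using g0 by simp
      then obtain e where e: "e > 0" "\<And>w. \<bar>w - 0\<bar> < e \<Longrightarrow> g w \<noteq> 0"
        using continuous_at_avoid[of 0 g 0] cont by (auto simp: dist_real_def)
      have "open (ball p (min e r))" "p \<in> ball p (min e r)" using e r by auto
      then obtain y where y: "f y = 0" "y \<in> ball p (min e r)" "y \<noteq> p"
        using assms(3) unfolding islimpt_def by blast
      define w where "w = y - p"
      have w: "\<bar>w\<bar> < e" "\<bar>w\<bar> < r" "w \<noteq> 0" using y unfolding w_def by (auto simp: dist_real_def)
      have "f (p + w) = w^m * g w" using fg w by simp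
      moreover have "f (p + w) = 0" using y w_def by simp
      ultimately have "g w = 0" using w by simp
      then show False using e w by auto
    qed
  qed
  show ?thesis
  proof (intro exI conjI allI impI)
    show "r > 0" by fact
    fix y assume "\<bar>y - p\<bar> < r"
    then have "(\<lambda>n. c n * (y - p)^n) sums f y" by (rule S)
    then show "f y = 0" using allz by (simp add: sums_iff)
  qed
qed

lemma ra1_identity:
  assumes "ra1 J f" "{a..b} \<subseteq> J" "infinite {t\<in>{a..b}. f t = 0}"
  shows "\<forall>t\<in>{a..b}. f t = 0"
proof -
  define T where "T = {t\<in>{a..b}. \<exists>e>0. \<forall>y. \<bar>y - t\<bar> < e \<longrightarrow> f y = 0}"
  have loc: "\<exists>e>0. \<forall>y. \<bar>y - t\<bar> < e \<longrightarrow> f y = 0" if "t \<in> {a..b}" "t islimpt {y. f y = 0}" for t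
    using ra1_local[OF assms(1)] that assms(2) by blast
  obtain p where p: "p \<in> {a..b}" "p islimpt {t\<in>{a..b}. f t = 0}"
    using assms(3) compact_eq_Bolzano_Weierstrass[of "{a..b}"] by auto
  have pT: "p \<in> T"
    using loc[OF p(1)] p(2) islimpt_subset[of p _ "{y. f y = 0}"] unfolding T_def using p(1) by blast
  have op: "openin (top_of_set {a..b}) T"
    unfolding openin_euclidean_subtopology_iff
  proof (intro conjI ballI)
    show "T \<subseteq> {a..b}" unfolding T_def by auto
    fix t assume "t \<in> T"
    then obtain e where e: "e > 0" "\<forall>y. \<bar>y - t\<bar> < e \<longrightarrow> f y = 0" unfolding T_def by auto
    show "\<exists>e>0. \<forall>x'\<in>{a..b}. dist x' t < e \<longrightarrow> x' \<in> T"
    proof (intro exI conjI ballI impI)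
      show "e/2 > 0" using e by simp
      fix x' assume x': "x' \<in> {a..b}" "dist x' t < e/2"
      have "\<forall>y. \<bar>y - x'\<bar> < e/2 \<longrightarrow> f y = 0"
      proof (intro allI impI)
        fix y assume "\<bar>y - x'\<bar> < e/2"
        then have "\<bar>y - t\<bar> < e" using x'(2) unfolding dist_real_def by linarith
        then show "f y = 0" using e by blast
      qed
      then show "x' \<in> T" unfolding T_def
        using x' e by (auto intro!: exI[of _ "e/2"])
    qed
  qed
  have cl: "closedin (top_of_set {a..b}) T"
    unfolding closedin_limpt
  proof (intro conjI allI impI)
    show "T \<subseteq> {a..b}" unfolding T_def by auto
    fix x assume x: "x islimpt T \<and> x \<in> {a..b}"
    have "T \<subseteq> {y. f y = 0}" unfolding T_def by force
    then have "x islimpt {y. f y = 0}" using x islimpt_subset by blast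
    then show "x \<in> T" using loc x unfolding T_def by blast
  qed
  have "T = {a..b}"
  proof -
    have "connected {a..b}" by simp
    then show ?thesis using connected_clopen[of "{a..b}"] op cl pT by blast
  qed
  then show ?thesis unfolding T_def by force
qed

definition upd :: "real^'d \<Rightarrow> 'd \<Rightarrow> real \<Rightarrow> real^'d" where
  "upd x d t = (\<chi> e. if e = d then t else x$e)"

lemma upd_nth[simp]: "upd x d t $ e = (if e = d then t else x$e)"
  unfolding upd_def by simp

lemma dist_upd: "dist (upd x d t) (upd x d t0) = \<bar>t - t0\<bar>"
proof -
  have "upd x d t - upd x d t0 = (t - t0) *\<^sub>R axis d 1"
    by (simp add: vec_eq_iff axis_def)
  then show ?thesis by (simp add: dist_norm)
qed

lemma section_ra1:
  assumes "real_analytic_on U F"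
  shows "ra1 {t. upd x d t \<in> U} (\<lambda>t. F (upd x d t))"
  unfolding ra1_def
proof (intro ballI)
  fix t0 assume "t0 \<in> {t. upd x d t \<in> U}"
  then have y0: "upd x d t0 \<in> U" by simp
  obtain r c where r: "r > 0" and hs: "\<And>y. y \<in> ball (upd x d t0) r \<Longrightarrow>
      ((\<lambda>\<alpha>. c \<alpha> * (\<Prod>e\<in>UNIV. (y$e - upd x d t0 $ e) ^ \<alpha> e)) has_sum F y) UNIV"
    using assms y0 unfolding real_analytic_on_def by blast
  define \<iota> where "\<iota> n = (\<lambda>e. if e = d then n else (0::nat))" for n
  have inj: "inj \<iota>"
  proof (rule injI)
    fix a b assume "\<iota> a = \<iota> b"
    then have "\<iota> a d = \<iota> b d" by simp
    then show "a = b" by (simp add: \<iota>_def)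
  qed
  show "\<exists>r>0. \<exists>c. \<forall>y. \<bar>y - t0\<bar> < r \<longrightarrow> (\<lambda>n. c n * (y - t0) ^ n) sums F (upd x d y)"
  proof (intro exI[of _ r] conjI exI[of _ "\<lambda>n. c (\<iota> n)"] allI impI r)
    fix t assume t: "\<bar>t - t0\<bar> < r"
    have "upd x d t \<in> ball (upd x d t0) r" using t by (simp add: dist_upd dist_commute)
    note h = hs[OF this]
    define g where "g \<alpha> = c \<alpha> * (\<Prod>e\<in>UNIV. (upd x d t $ e - upd x d t0 $ e) ^ \<alpha> e)" for \<alpha>
    have g_out: "g \<alpha> = 0" if "\<alpha> \<notin> range \<iota>" for \<alpha>
    proof -
      have "\<exists>e. e \<noteq> d \<and> \<alpha> e \<noteq> 0"
      proof (rule ccontr)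
        assume "\<not> ?thesis"
        then have "\<alpha> = \<iota> (\<alpha> d)" unfolding \<iota>_def by (force simp: fun_eq_iff)
        then show False using that by auto
      qed
      then obtain e where "e \<noteq> d" "\<alpha> e \<noteq> 0" by blast
      then have "(upd x d t $ e - upd x d t0 $ e) ^ \<alpha> e = 0" by simp
      then show ?thesis unfolding g_def by (metis finite UNIV_I mult_zero_right prod_zero)
    qed
    have "(g has_sum F (upd x d t)) UNIV" using h unfolding g_def .
    then have "(g has_sum F (upd x d t)) (range \<iota>)"
      by (subst has_sum_cong_neutral[of UNIV "range \<iota>" g g]) (use g_out in auto)
    then have "((g \<circ> \<iota>) has_sum F (upd x d t)) UNIV"
      using has_sum_reindex[OF inj_on_subset[OF inj subset_UNIV]] by blast
    moreover have "(g \<circ> \<iota>) n = c (\<iota> n) * (t - t0) ^ n" for n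
    proof -
      have "(\<Prod>e\<in>UNIV. (upd x d t $ e - upd x d t0 $ e) ^ \<iota> n e) = (\<Prod>e\<in>UNIV. if e = d then (t - t0)^n else 1)"
        by (rule prod.cong) (auto simp: \<iota>_def)
      also have "\<dots> = (t - t0)^n" by (simp add: prod.delta)
      finally show ?thesis unfolding g_def by simp
    qed
    ultimately show "(\<lambda>n. c (\<iota> n) * (t - t0) ^ n) sums F (upd x d t)"
      by (intro has_sum_imp_sums) (simp add: comp_def)
  qed
qed

lemma analytic_continuous:
  fixes F :: "real^'d \<Rightarrow> real"
  assumes "real_analytic_on U F"
  shows "continuous_on U F"
proof (rule continuous_at_imp_continuous_on, intro ballI)
  fix x assume x: "x \<in> U"
  obtain r c where r: "r > 0" and hs: "\<And>y. y \<in> ball x r \<Longrightarrow>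
      ((\<lambda>\<alpha>. c \<alpha> * (\<Prod>e\<in>UNIV. (y$e - x $ e) ^ \<alpha> e)) has_sum F y) UNIV"
    using assms x unfolding real_analytic_on_def by blast
  define \<rho> where "\<rho> = r / (2 * real CARD('d))"
  have \<rho>: "\<rho> > 0" unfolding \<rho>_def using r by simp
  define Y where "Y = {y::real^'d. \<forall>e. \<bar>y$e - x$e\<bar> \<le> \<rho>}"
  have Yball: "Y \<subseteq> ball x r"
  proof
    fix y assume "y \<in> Y"
    then have "(\<Sum>e\<in>UNIV. \<bar>(y - x)$e\<bar>) \<le> (\<Sum>e\<in>(UNIV::'d set). \<rho>)"
      unfolding Y_def by (intro sum_mono) simp
    then have "norm (y - x) \<le> (\<Sum>e\<in>(UNIV::'d set). \<rho>)"
      using norm_le_l1_cart[of "y - x"] by linarith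
    also have "\<dots> = r / 2" unfolding \<rho>_def by simp
    finally show "y \<in> ball x r" using r by (simp add: dist_norm norm_minus_commute)
  qed
  define z :: "real^'d" where "z = (\<chi> e. x$e + \<rho>)"
  have zY: "z \<in> Y" unfolding Y_def z_def using \<rho> by simp
  define f where "f \<alpha> y = c \<alpha> * (\<Prod>e\<in>UNIV. (y$e - x $ e) ^ \<alpha> e)" for \<alpha> y
  have "(\<lambda>\<alpha>. f \<alpha> z) summable_on UNIV"
    using hs[of z] zY Yball unfolding f_def by (auto simp: has_sum_imp_summable)
  then have Msum: "(\<lambda>\<alpha>. norm (f \<alpha> z)) summable_on UNIV"
    using summable_on_iff_abs_summable_on_real[of "\<lambda>\<alpha>. f \<alpha> z" UNIV] by simp
  have bound: "norm (f \<alpha> y) \<le> norm (f \<alpha> z)" if "y \<in> Y" for \<alpha> y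
  proof -
    have "(\<Prod>e\<in>UNIV. \<bar>y$e - x $ e\<bar> ^ \<alpha> e) \<le> (\<Prod>e\<in>UNIV. \<bar>z$e - x $ e\<bar> ^ \<alpha> e)"
      using that \<rho> unfolding Y_def z_def by (intro prod_mono conjI power_mono) auto
    then show ?thesis unfolding f_def
      by (simp add: abs_mult abs_prod power_abs mult_left_mono)
  qed
  have ul: "uniform_limit Y (\<lambda>X y. \<Sum>\<alpha>\<in>X. f \<alpha> y) F (finite_subsets_at_top UNIV)"
    by (rule Weierstrass_m_test_general'[OF _ _ Msum])
       (use bound hs Yball in \<open>auto simp: f_def\<close>)
  have "continuous_on Y F"
  proof (rule uniform_limit_theorem[OF _ ul])
    show "\<forall>\<^sub>F X in finite_subsets_at_top UNIV. continuous_on Y (\<lambda>y. \<Sum>\<alpha>\<in>X. f \<alpha> y)"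
      unfolding f_def by (intro always_eventually allI) (intro continuous_intros)
    show "\<not> trivial_limit (finite_subsets_at_top (UNIV :: ('d \<Rightarrow> nat) set))"
      by (simp add: finite_subsets_at_top_neq_bot)
  qed
  moreover have "x \<in> interior Y"
  proof (rule interiorI[of "ball x \<rho>"])
    show "ball x \<rho> \<subseteq> Y" unfolding Y_def
    proof (safe)
      fix y e assume "y \<in> ball x \<rho>"
      then have "norm (y - x) < \<rho>" by (simp add: dist_norm norm_minus_commute)
      then show "\<bar>y$e - x$e\<bar> \<le> \<rho>" using component_le_norm_cart[of "y - x" e] by simp
    qed
  qed (use \<rho> in auto)
  ultimately show "isCont F x" using continuous_on_interior by blast
qed

definition sepP :: "'a measure \<Rightarrow> 'i set \<Rightarrow> ('i \<Rightarrow> 'a set) \<Rightarrow> (('i \<Rightarrow> 'a) \<Rightarrow> real) \<Rightarrow> bool" where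
  "sepP Nm I B F \<longleftrightarrow> (\<forall>i\<in>I. \<forall>x\<in>PiE I B. \<forall>T\<in>sets Nm. T \<subseteq> B i \<longrightarrow> emeasure Nm T \<noteq> 0 \<longrightarrow>
      (\<forall>t\<in>T. F (x(i:=t)) = 0) \<longrightarrow> (\<forall>t\<in>B i. F (x(i:=t)) = 0))"

lemma G_lemma:
  fixes Nm :: "'a measure" and B :: "'i \<Rightarrow> 'a set"
  assumes sf: "sigma_finite_measure Nm" and fin: "finite I" and B: "\<And>i. B i \<in> sets Nm"
  shows "F \<in> borel_measurable (PiM I (\<lambda>_. Nm)) \<Longrightarrow> sepP Nm I B F \<Longrightarrow>
    emeasure (PiM I (\<lambda>_. Nm)) {x\<in>space (PiM I (\<lambda>_. Nm)). x \<in> PiE I B \<and> F x = 0} \<noteq> 0 \<Longrightarrow>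
    \<forall>x\<in>PiE I B. F x = 0"
  using fin
proof (induction I arbitrary: F rule: finite_induct)
  case empty
  then have "{x\<in>space (PiM {} (\<lambda>_. Nm)). x \<in> PiE {} B \<and> F x = 0} \<noteq> {}"
    by (metis emeasure_empty)
  then obtain x where "x \<in> PiE {} B" "F x = 0" by blast
  then show ?case by simp
next
  case (insert i J)
  interpret product_sigma_finite "\<lambda>_. Nm" using sf by (simp add: product_sigma_finite_def)
  interpret PJ: finite_product_sigma_finite "\<lambda>_. Nm" J by standard (use insert in auto)
  let ?P = "PiM J (\<lambda>_. Nm)" and ?Pi = "PiM (insert i J) (\<lambda>_. Nm)"
  define Z where "Z = {x\<in>space ?Pi. x \<in> PiE (insert i J) B \<and> F x = 0}"
  have Fm[measurable]: "F \<in> borel_measurable ?Pi" by fact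
  have PiEm: "PiE (insert i J) B \<in> sets ?Pi"
    using insert B by (intro sets_PiM_I_finite) auto
  have Zm[measurable]: "Z \<in> sets ?Pi"
  proof -
    have "Z = PiE (insert i J) B \<inter> {x\<in>space ?Pi. F x = 0}" unfolding Z_def
      using sets.sets_into_space[OF PiEm] by auto
    moreover have "{x\<in>space ?Pi. F x = 0} \<in> sets ?Pi" by measurable
    ultimately show ?thesis using PiEm by auto
  qed
  define G where "G t = (\<integral>\<^sup>+ y. indicator Z (y(i:=t)) \<partial>?P)" for t
  have upd_m: "(\<lambda>(t,y). y(i:=t)) \<in> measurable (Nm \<Otimes>\<^sub>M ?P) ?Pi"
  proof -
    have "(\<lambda>(t,y). y(i:=t)) = (\<lambda>(f, y). f(i := y)) \<circ> (\<lambda>(t,y). (y,t))" by auto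
    moreover have "(\<lambda>(t,y). (y,t)) \<in> measurable (Nm \<Otimes>\<^sub>M ?P) (?P \<Otimes>\<^sub>M Nm)" by measurable
    ultimately show ?thesis using measurable_add_dim[of i J "\<lambda>_. Nm"] by (metis measurable_comp)
  qed
  have Gm: "G \<in> borel_measurable Nm"
    unfolding G_def
  proof (rule PJ.borel_measurable_nn_integral)
    show "(\<lambda>(t,y). indicator Z (y(i:=t)) :: ennreal) \<in> borel_measurable (Nm \<Otimes>\<^sub>M ?P)"
      using measurable_comp[OF upd_m borel_measurable_indicator[OF Zm]]
      by (simp add: comp_def case_prod_beta)
  qed
  have "emeasure ?Pi Z = (\<integral>\<^sup>+ x. indicator Z x \<partial>?Pi)" using Zm by simp
  also have "\<dots> = (\<integral>\<^sup>+ t. G t \<partial>Nm)"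
    unfolding G_def by (rule product_nn_integral_insert_rev) (use insert in auto)
  finally have "(\<integral>\<^sup>+ t. G t \<partial>Nm) \<noteq> 0" using insert.prems(3) unfolding Z_def by simp
  then have nAE: "\<not> (AE t in Nm. G t = 0)" using nn_integral_0_iff_AE[OF Gm] by simp
  define T0 where "T0 = {t\<in>space Nm. G t \<noteq> 0}"
  have T0m: "T0 \<in> sets Nm" unfolding T0_def using Gm by measurable
  have T0pos: "emeasure Nm T0 \<noteq> 0"
  proof
    assume "emeasure Nm T0 = 0"
    then have "AE t in Nm. G t = 0" using T0m by (intro AE_I[of _ _ T0]) (auto simp: T0_def)
    then show False using nAE by simp
  qed
  have Gout: "G t = 0" if "t \<notin> B i" for t
  proof -
    have "indicator Z (y(i:=t)) = (0::ennreal)" for y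
      using that unfolding Z_def by (auto simp: indicator_def PiE_iff)
    then show ?thesis unfolding G_def by simp
  qed
  have T0B: "T0 \<subseteq> B i" unfolding T0_def using Gout by auto
  have vanish: "\<forall>y\<in>PiE J B. F (y(i:=t)) = 0" if t: "t \<in> T0" for t
  proof -
    have tsp: "t \<in> space Nm" and tB: "t \<in> B i" using t T0B unfolding T0_def by auto
    define Ft where "Ft y = F (y(i:=t))" for y
    have "Ft \<in> borel_measurable ?P"
    proof -
      have "(\<lambda>y. y(i:=t)) \<in> measurable ?P ?Pi"
        using measurable_compose_Pair1[OF tsp upd_m] by simp
      from measurable_comp[OF this Fm] show ?thesis unfolding Ft_def by (simp add: comp_def)
    qed
    moreover have "sepP Nm J B Ft"
      unfolding sepP_def
    proof (intro ballI impI)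
      fix j x T s assume j: "j \<in> J" and x: "x \<in> PiE J B" and T: "T \<in> sets Nm" "T \<subseteq> B j"
        "emeasure Nm T \<noteq> 0" and z: "\<forall>s\<in>T. Ft (x(j:=s)) = 0" and s: "s \<in> B j"
      have ij: "i \<noteq> j" using j insert by auto
      have x': "x(i:=t) \<in> PiE (insert i J) B" using PiE_fun_upd[OF tB x] .
      have "\<forall>s\<in>T. F ((x(i:=t))(j:=s)) = 0" using z ij unfolding Ft_def by (simp add: fun_upd_twist)
      then have "\<forall>s\<in>B j. F ((x(i:=t))(j:=s)) = 0"
        using insert.prems(2) j x' T unfolding sepP_def by blast
      then show "Ft (x(j:=s)) = 0" using ij s unfolding Ft_def by (simp add: fun_upd_twist)
    qed
    moreover have "emeasure ?P {y\<in>space ?P. y \<in> PiE J B \<and> Ft y = 0} \<noteq> 0"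
    proof -
      have "G t = (\<integral>\<^sup>+ y. indicator {y\<in>space ?P. y \<in> PiE J B \<and> Ft y = 0} y \<partial>?P)"
        unfolding G_def
      proof (rule nn_integral_cong)
        fix y assume y: "y \<in> space ?P"
        have "y(i:=t) \<in> space ?Pi" using y tsp insert(2)
          by (auto simp: space_PiM PiE_iff extensional_def)
        moreover have "y(i:=t) \<in> PiE (insert i J) B \<longleftrightarrow> y \<in> PiE J B"
          using y tB insert(2) by (auto simp: space_PiM PiE_iff extensional_def split: if_splits)
        ultimately show "indicator Z (y(i:=t)) = indicator {y\<in>space ?P. y \<in> PiE J B \<and> Ft y = 0} y"
          using y unfolding Z_def Ft_def by (auto simp: indicator_def)
      qed
      moreover have "{y\<in>space ?P. y \<in> PiE J B \<and> Ft y = 0} \<in> sets ?P"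
      proof -
        have "PiE J B \<in> sets ?P" using insert B by (intro sets_PiM_I_finite) auto
        moreover have "{y\<in>space ?P. Ft y = 0} \<in> sets ?P" using \<open>Ft \<in> borel_measurable ?P\<close> by measurable
        ultimately have "PiE J B \<inter> {y\<in>space ?P. Ft y = 0} \<in> sets ?P" by auto
        moreover have "{y\<in>space ?P. y \<in> PiE J B \<and> Ft y = 0} = PiE J B \<inter> {y\<in>space ?P. Ft y = 0}" by auto
        ultimately show ?thesis by simp
      qed
      ultimately have "G t = emeasure ?P {y\<in>space ?P. y \<in> PiE J B \<and> Ft y = 0}" by simp
      then show ?thesis using t unfolding T0_def by simp
    qed
    ultimately have "\<forall>y\<in>PiE J B. Ft y = 0" using insert.IH by blast
    then show ?thesis unfolding Ft_def .
  qed
  show ?case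
  proof
    fix x assume x: "x \<in> PiE (insert i J) B"
    have y: "x(i:=undefined) \<in> PiE J B" using fun_upd_in_PiE[OF insert(2) x] .
    have "\<forall>t\<in>T0. F (x(i:=t)) = 0"
      using vanish y by (metis fun_upd_upd)
    then have "\<forall>t\<in>B i. F (x(i:=t)) = 0"
      using insert.prems(2) x T0m T0B T0pos unfolding sepP_def by blast
    moreover have "x i \<in> B i" using x by auto
    ultimately show "F x = 0" by (metis fun_upd_triv)
  qed
qed

definition Phi :: "(real^'d \<Rightarrow> real) \<Rightarrow> real^'d" where
  "Phi f = (\<Sum>b\<in>Basis. f b *\<^sub>R b)"

lemma Phi_inner: "b \<in> Basis \<Longrightarrow> Phi f \<bullet> b = f b"
  unfolding Phi_def by (simp add: inner_sum_left inner_Basis if_distrib sum.delta cong: if_cong)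

lemma Basis_vec_iff: "(b :: real^'d) \<in> Basis \<longleftrightarrow> (\<exists>e. b = axis e 1)"
  by (auto simp: Basis_vec_def)

lemma Phi_nth: "Phi f $ e = f (axis e 1)"
proof -
  have "Phi f $ e = Phi f \<bullet> axis e 1" by (simp add: inner_axis)
  also have "\<dots> = f (axis e 1)" by (rule Phi_inner) (auto simp: Basis_vec_iff)
  finally show ?thesis .
qed


lemma Phi_meas: "(Phi :: (real^'d \<Rightarrow> real) \<Rightarrow> real^'d) \<in> borel_measurable (PiM Basis (\<lambda>_. lborel))"
  unfolding Phi_def by measurable

lemma unit_cube_cbox: "unit_cube = cbox (0::real^'d) 1"
  unfolding unit_cube_def by (auto simp: mem_box_cart)

lemma closed_unit_cube: "closed (unit_cube :: (real^'d) set)"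
  unfolding unit_cube_cbox by (rule closed_cbox)

lemma upd_cube: "x \<in> unit_cube \<Longrightarrow> t \<in> {0..1} \<Longrightarrow> upd x d t \<in> unit_cube"
  unfolding unit_cube_def by auto

lemma inner_lemma:
  fixes q :: "real^'d \<Rightarrow> real"
  assumes cont: "continuous_on unit_cube q"
    and sep1: "\<And>x d. x \<in> unit_cube \<Longrightarrow> infinite {t\<in>{0..1}. q (upd x d t) = 0} \<Longrightarrow> \<forall>t\<in>{0..1}. q (upd x d t) = 0"
    and pos: "emeasure lborel {x\<in>unit_cube. q x = 0} \<noteq> 0"
  shows "\<forall>x\<in>unit_cube. q x = 0"
proof -
  let ?P = "PiM (Basis :: (real^'d) set) (\<lambda>_. lborel :: real measure)"
  define qm where "qm x = indicator unit_cube x *\<^sub>R q x + (1 - indicator unit_cube x)" for x :: "real^'d"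
  have cube_borel: "unit_cube \<in> sets (borel :: (real^'d) measure)" using closed_unit_cube by (rule borel_closed)
  have qm_m[measurable]: "qm \<in> borel_measurable borel"
    unfolding qm_def using borel_measurable_continuous_on_indicator[OF cube_borel cont]
    by (intro borel_measurable_add borel_measurable_diff) (auto intro: borel_measurable_indicator cube_borel)
  have qm_eq: "x \<in> unit_cube \<Longrightarrow> qm x = q x" for x unfolding qm_def by simp
  define F where "F f = qm (Phi f)" for f
  have Fm: "F \<in> borel_measurable ?P" unfolding F_def using Phi_meas qm_m by measurable
  define Zc where "Zc = {x\<in>unit_cube. q x = 0}"
  have Zc_closed: "closed Zc" unfolding Zc_def
    by (rule continuous_closed_preimage_constant[OF cont closed_unit_cube])
  have PhiE: "Phi f \<in> unit_cube \<longleftrightarrow> (\<forall>b\<in>Basis. f b \<in> {0..1})" for f :: "real^'d \<Rightarrow> real"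
    unfolding unit_cube_def Ball_def by (auto simp: Phi_nth Basis_vec_iff)
  have pre: "Phi -` Zc \<inter> space ?P = {f\<in>space ?P. f \<in> PiE Basis (\<lambda>_. {0..1}) \<and> F f = 0}"
    unfolding Zc_def F_def using qm_eq PhiE
    by (auto simp: space_PiM PiE_iff extensional_def)
  have "emeasure lborel Zc = emeasure (distr ?P borel Phi) Zc"
    by (subst lborel_eq) (simp add: Phi_def[abs_def])
  also have "\<dots> = emeasure ?P (Phi -` Zc \<inter> space ?P)"
    using Zc_closed by (intro emeasure_distr Phi_meas) auto
  finally have posP: "emeasure ?P {f\<in>space ?P. f \<in> PiE Basis (\<lambda>_. {0..1}) \<and> F f = 0} \<noteq> 0"
    using pos pre unfolding Zc_def by simp
  have sep: "sepP lborel Basis (\<lambda>_. {0..1}) F"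
    unfolding sepP_def
  proof (intro ballI impI)
    fix b f T t assume b: "b \<in> Basis" and f: "f \<in> PiE Basis (\<lambda>_. {0..1::real})" and T: "T \<in> sets lborel"
      "T \<subseteq> {0..1}" "emeasure lborel T \<noteq> 0" and z: "\<forall>t\<in>T. F (f(b:=t)) = 0" and t: "t \<in> {0..1::real}"
    obtain d where d: "b = axis d 1" using b Basis_vec_iff by blast
    define x where "x = Phi f"
    have x: "x \<in> unit_cube" unfolding x_def using f PhiE by auto
    have Phiupd: "Phi (f(b:=s)) = upd x d s" for s
    proof -
      have "Phi (f(b:=s)) $ e = upd x d s $ e" for e
        unfolding x_def d by (simp add: axis_eq_axis Phi_nth)
      then show ?thesis by (simp add: vec_eq_iff)
    qed
    have "infinite T" using T(3) finite_imp_null_set_lborel by blast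
    moreover have "T \<subseteq> {s\<in>{0..1}. q (upd x d s) = 0}"
    proof
      fix s assume s: "s \<in> T"
      then have s01: "s \<in> {0..1}" using T(2) by auto
      have "qm (upd x d s) = 0" using z s unfolding F_def Phiupd by auto
      then show "s \<in> {s\<in>{0..1}. q (upd x d s) = 0}" using s01 qm_eq[OF upd_cube[OF x s01]] by simp
    qed
    ultimately have "infinite {s\<in>{0..1}. q (upd x d s) = 0}" using finite_subset by blast
    then have "\<forall>s\<in>{0..1}. q (upd x d s) = 0" using sep1[OF x] by blast
    then show "F (f(b:=t)) = 0" using t upd_cube[OF x] qm_eq unfolding F_def Phiupd by auto
  qed
  have all: "\<forall>f\<in>PiE Basis (\<lambda>_. {0..1}). F f = 0"
    by (rule G_lemma[OF _ _ _ Fm sep posP]) (auto intro: lborel.sigma_finite_measure_axioms)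
  show ?thesis
  proof
    fix x :: "real^'d" assume x: "x \<in> unit_cube"
    define f where "f = restrict (\<lambda>b. x \<bullet> b) Basis"
    have "Phi f = x" unfolding Phi_def f_def by (simp add: euclidean_representation)
    moreover have "f \<in> PiE Basis (\<lambda>_. {0..1})" using x PhiE[of f] \<open>Phi f = x\<close> unfolding f_def by auto
    ultimately show "q x = 0" using all qm_eq x unfolding F_def by force
  qed
qed

lemma cell_sub_cube:
  assumes "m \<in> idx M" shows "cell M m \<subseteq> unit_cube"
proof
  fix s assume s: "s \<in> cell M m"
  show "s \<in> unit_cube" unfolding unit_cube_def
  proof (intro CollectI allI conjI)
    fix d
    have md: "1 \<le> m d" "m d \<le> M d" using assms unfolding idx_def by (auto simp: PiE_iff)
    have Mpos: "real (M d) > 0" using md by simp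
    have sd: "(real (m d) - 1) / real (M d) \<le> s$d" "s$d < real (m d) / real (M d)"
      using s unfolding cell_def by auto
    have "0 \<le> (real (m d) - 1) / real (M d)" using md by simp
    then show "0 \<le> s$d" using sd by linarith
    have "real (m d) / real (M d) \<le> 1" using md Mpos by (simp add: divide_le_eq_1)
    then show "s$d \<le> 1" using sd by linarith
  qed
qed

lemma cell_point:
  assumes "m \<in> idx M" shows "(\<chi> d. (real (m d) - 1) / real (M d)) \<in> cell M m"
  unfolding cell_def
proof (intro CollectI allI conjI)
  fix d
  have md: "1 \<le> m d" "m d \<le> M d" using assms unfolding idx_def by (auto simp: PiE_iff)
  then have Mp: "real (M d) > 0" by simp
  show "(real (m d) - 1) / real (M d) \<le> (\<chi> d. (real (m d) - 1) / real (M d)) $ d" by simp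
  show "(\<chi> d. (real (m d) - 1) / real (M d)) $ d < real (m d) / real (M d)"
    using Mp by (simp add: divide_strict_right_mono)
qed

lemma cell_borel: "cell M m \<in> sets (borel :: (real^'d) measure)"
proof -
  have "cell M m = {s::real^'d. \<forall>d. (real (m d) - 1) / real (M d) \<le> s$d} \<inter>
      (\<Inter>d\<in>UNIV. {s::real^'d. s$d < real (m d) / real (M d)})"
    unfolding cell_def by auto
  moreover have "closed {s::real^'d. \<forall>d. (real (m d) - 1) / real (M d) \<le> s$d}"
    by (intro closed_Collect_all closed_halfspace_component_ge_cart)
  moreover have "open (\<Inter>d\<in>UNIV. {s::real^'d. s$d < real (m d) / real (M d)})"
    by (intro open_INT) (auto intro: open_halfspace_component_lt_cart)
  ultimately show ?thesis by (simp add: borel_closed borel_open sets.Int)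
qed

lemma cell_pos:
  assumes "m \<in> idx M" shows "emeasure lborel (cell M m :: (real^'d) set) \<noteq> 0"
proof -
  define a :: "real^'d" where "a = (\<chi> d. (real (m d) - 1) / real (M d))"
  define b :: "real^'d" where "b = (\<chi> d. real (m d) / real (M d))"
  have Mp: "real (M d) > 0" for d
  proof -
    have "1 \<le> m d" "m d \<le> M d" using assms unfolding idx_def by (auto simp: PiE_iff)
    then show ?thesis by simp
  qed
  have ab: "a$d < b$d" for d unfolding a_def b_def using Mp[of d] by (simp add: divide_strict_right_mono)
  have sub: "box a b \<subseteq> cell M m" unfolding cell_def
    by (auto simp: mem_box_cart a_def b_def less_imp_le)
  have le: "\<And>c. c \<in> Basis \<Longrightarrow> a \<bullet> c \<le> b \<bullet> c" using ab by (auto simp: Basis_vec_iff inner_axis less_imp_le)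
  have pos: "(\<Prod>c\<in>Basis. (b - a) \<bullet> c) > 0" using ab by (intro prod_pos) (auto simp: Basis_vec_iff inner_axis)
  define P where "P = (\<Prod>c\<in>Basis. (b - a) \<bullet> c)"
  have "emeasure lborel (box a b) = ennreal P" unfolding P_def by (rule emeasure_lborel_box[OF le])
  moreover have "ennreal P \<noteq> 0" using pos unfolding P_def[symmetric] ennreal_eq_0_iff by simp
  ultimately have ne: "emeasure lborel (box a b) \<noteq> 0" by simp
  have le2: "emeasure lborel (box a b) \<le> emeasure lborel (cell M m)"
    by (rule emeasure_mono[OF sub]) (simp add: cell_borel)
  show ?thesis
  proof
    assume "emeasure lborel (cell M m) = 0"
    then have "emeasure lborel (box a b) = 0" using le2 by simp
    then show False using ne by simp
  qed
qed

lemma comb_sep: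
  fixes F G \<phi> \<psi> :: "nat \<Rightarrow> real^'d \<Rightarrow> real"
  assumes A: "\<And>k. k<K \<Longrightarrow> unit_cube \<subseteq> U k \<and> real_analytic_on (U k) (F k) \<and> (\<forall>s\<in>unit_cube. F k s = \<phi> k s)"
    and B: "\<And>k. k<K' \<Longrightarrow> unit_cube \<subseteq> V k \<and> real_analytic_on (V k) (G k) \<and> (\<forall>s\<in>unit_cube. G k s = \<psi> k s)"
    and x: "x \<in> unit_cube"
    and inf: "infinite {t\<in>{0..1}. (\<Sum>k<K. a k * \<phi> k (upd x d t)) - (\<Sum>k<K'. b k * \<psi> k (upd x d t)) = 0}"
  shows "\<forall>t\<in>{0..1}. (\<Sum>k<K. a k * \<phi> k (upd x d t)) - (\<Sum>k<K'. b k * \<psi> k (upd x d t)) = 0"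
proof -
  define J where "J = {t. (\<forall>k<K. upd x d t \<in> U k) \<and> (\<forall>k<K'. upd x d t \<in> V k)}"
  have J01: "{0..1} \<subseteq> J"
  proof
    fix t :: real assume t: "t \<in> {0..1}"
    have u: "upd x d t \<in> unit_cube" using upd_cube[OF x t] .
    have "upd x d t \<in> U k" if "k < K" for k using A[OF that] u by blast
    moreover have "upd x d t \<in> V k" if "k < K'" for k using B[OF that] u by blast
    ultimately show "t \<in> J" unfolding J_def by blast
  qed
  define f where "f t = (\<Sum>k<K. a k * F k (upd x d t)) - (\<Sum>k<K'. b k * G k (upd x d t))" for t
  have ra: "ra1 J f" unfolding f_def
  proof (intro ra1_diff ra1_sum ra1_cmult)
    fix k assume k: "k \<in> {..<K}"
    show "ra1 J (\<lambda>t. F k (upd x d t))"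
      by (rule ra1_mono[OF section_ra1]) (use A[of k] k in \<open>auto simp: J_def\<close>)
  next
    fix k assume k: "k \<in> {..<K'}"
    show "ra1 J (\<lambda>t. G k (upd x d t))"
      by (rule ra1_mono[OF section_ra1]) (use B[of k] k in \<open>auto simp: J_def\<close>)
  qed simp_all
  have eq: "f t = (\<Sum>k<K. a k * \<phi> k (upd x d t)) - (\<Sum>k<K'. b k * \<psi> k (upd x d t))" if "t \<in> {0..1}" for t
  proof -
    have u: "upd x d t \<in> unit_cube" using upd_cube[OF x that] .
    have 1: "(\<Sum>k<K. a k * F k (upd x d t)) = (\<Sum>k<K. a k * \<phi> k (upd x d t))"
    proof (rule sum.cong[OF refl])
      fix k assume "k \<in> {..<K}"
      then have "F k (upd x d t) = \<phi> k (upd x d t)" using A[of k] u by auto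
      then show "a k * F k (upd x d t) = a k * \<phi> k (upd x d t)" by simp
    qed
    have 2: "(\<Sum>k<K'. b k * G k (upd x d t)) = (\<Sum>k<K'. b k * \<psi> k (upd x d t))"
    proof (rule sum.cong[OF refl])
      fix k assume "k \<in> {..<K'}"
      then have "G k (upd x d t) = \<psi> k (upd x d t)" using B[of k] u by auto
      then show "b k * G k (upd x d t) = b k * \<psi> k (upd x d t)" by simp
    qed
    show ?thesis unfolding f_def 1 2 ..
  qed
  have "{t\<in>{0..1}. f t = 0} = {t\<in>{0..1}. (\<Sum>k<K. a k * \<phi> k (upd x d t)) - (\<Sum>k<K'. b k * \<psi> k (upd x d t)) = 0}"
    using eq by auto
  then have "infinite {t\<in>{0..1}. f t = 0}" using inf by simp
  then have fz: "\<forall>t\<in>{0..1}. f t = 0" using ra1_identity[OF ra J01] by blast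
  show ?thesis
  proof
    fix t :: real assume t: "t \<in> {0..1}"
    have "f t = 0" using fz t by blast
    then show "(\<Sum>k<K. a k * \<phi> k (upd x d t)) - (\<Sum>k<K'. b k * \<psi> k (upd x d t)) = 0"
      using eq[OF t] by simp
  qed
qed

theorem theorem4:
  fixes g1 g2 b1 b2 :: "real^'d \<Rightarrow> real^'d \<Rightarrow> real"
    and K1 K2 :: nat
    and \<delta>1 \<delta>2 :: "'d \<Rightarrow> real"
    and M :: "'d \<Rightarrow> nat"
  assumes G1: "finite_rank_analytic_cov g1 K1"
    and G2: "finite_rank_analytic_cov g2 K2"
    and K12: "K2 \<le> K1"
    and B1: "cov_kernel b1" "continuous_kernel b1" "banded \<delta>1 b1"
    and B2: "cov_kernel b2" "continuous_kernel b2" "banded \<delta>2 b2"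
    and \<delta>1_range: "\<forall>d. 0 < \<delta>1 d \<and> \<delta>1 d < 1/2"
    and \<delta>2_range: "\<forall>d. 0 < \<delta>2 d \<and> \<delta>2 d < 1/2"
    and Kbound: "K1 \<le> Kstar M \<delta>1 \<delta>2"
  shows "AE s in grid_measure M. s \<in> grids M \<longrightarrow>
           ((\<lambda>x. kernel_tensor M g1 s x + kernel_tensor M b1 s x)
              = (\<lambda>x. kernel_tensor M g2 s x + kernel_tensor M b2 s x)
            \<longleftrightarrow> kernel_tensor M g1 s = kernel_tensor M g2 s
                \<and> kernel_tensor M b1 s = kernel_tensor M b2 s)"
proof -
  obtain lam phi where phiA: "\<forall>k<K1. real_analytic_on_cube (phi k)"
    and g1: "\<forall>s\<in>unit_cube. \<forall>t\<in>unit_cube. g1 s t = (\<Sum>k<K1. lam k * phi k s * phi k t)"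
    using G1 unfolding finite_rank_analytic_cov_def by blast
  obtain mu psi where psiA: "\<forall>k<K2. real_analytic_on_cube (psi k)"
    and g2: "\<forall>s\<in>unit_cube. \<forall>t\<in>unit_cube. g2 s t = (\<Sum>k<K2. mu k * psi k s * psi k t)"
    using G2 unfolding finite_rank_analytic_cov_def by blast
  have "\<forall>k. \<exists>UF. k < K1 \<longrightarrow> (open (fst UF) \<and> unit_cube \<subseteq> fst UF \<and> real_analytic_on (fst UF) (snd UF)
      \<and> (\<forall>s\<in>unit_cube. snd UF s = phi k s))"
    using phiA unfolding real_analytic_on_cube_def by (metis fst_conv snd_conv)
  then obtain UF1 where UF1: "\<And>k. k < K1 \<Longrightarrow> open (fst (UF1 k)) \<and> unit_cube \<subseteq> fst (UF1 k) \<and>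
      real_analytic_on (fst (UF1 k)) (snd (UF1 k)) \<and> (\<forall>s\<in>unit_cube. snd (UF1 k) s = phi k s)"
    using choice[of "\<lambda>k UF. k < K1 \<longrightarrow> (open (fst UF) \<and> unit_cube \<subseteq> fst UF \<and> real_analytic_on (fst UF) (snd UF)
      \<and> (\<forall>s\<in>unit_cube. snd UF s = phi k s))"] by blast
  have "\<forall>k. \<exists>UF. k < K2 \<longrightarrow> (open (fst UF) \<and> unit_cube \<subseteq> fst UF \<and> real_analytic_on (fst UF) (snd UF)
      \<and> (\<forall>s\<in>unit_cube. snd UF s = psi k s))"
    using psiA unfolding real_analytic_on_cube_def by (metis fst_conv snd_conv)
  then obtain UF2 where UF2: "\<And>k. k < K2 \<Longrightarrow> open (fst (UF2 k)) \<and> unit_cube \<subseteq> fst (UF2 k) \<and>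
      real_analytic_on (fst (UF2 k)) (snd (UF2 k)) \<and> (\<forall>s\<in>unit_cube. snd (UF2 k) s = psi k s)"
    using choice[of "\<lambda>k UF. k < K2 \<longrightarrow> (open (fst UF) \<and> unit_cube \<subseteq> fst UF \<and> real_analytic_on (fst UF) (snd UF)
      \<and> (\<forall>s\<in>unit_cube. snd UF s = psi k s))"] by blast
  define U1 where "U1 k = fst (UF1 k)" for k
  define F1 where "F1 k = snd (UF1 k)" for k
  define U2 where "U2 k = fst (UF2 k)" for k
  define F2 where "F2 k = snd (UF2 k)" for k
  have A1: "\<And>k. k<K1 \<Longrightarrow> unit_cube \<subseteq> U1 k \<and> real_analytic_on (U1 k) (F1 k) \<and> (\<forall>s\<in>unit_cube. F1 k s = phi k s)"
    using UF1 unfolding U1_def F1_def by blast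
  have A2: "\<And>k. k<K2 \<Longrightarrow> unit_cube \<subseteq> U2 k \<and> real_analytic_on (U2 k) (F2 k) \<and> (\<forall>s\<in>unit_cube. F2 k s = psi k s)"
    using UF2 unfolding U2_def F2_def by blast
  have phic: "continuous_on unit_cube (phi k)" if k: "k < K1" for k
  proof -
    have "continuous_on unit_cube (F1 k)"
      using A1[OF k] analytic_continuous continuous_on_subset by blast
    then show ?thesis using A1[OF k] continuous_on_eq by blast
  qed
  have psic: "continuous_on unit_cube (psi k)" if k: "k < K2" for k
  proof -
    have "continuous_on unit_cube (F2 k)"
      using A2[OF k] analytic_continuous continuous_on_subset by blast
    then show ?thesis using A2[OF k] continuous_on_eq by blast
  qed
  define h where "h s t = g1 s t - g2 s t" for s t
  have hA: "h s t = (\<Sum>k<K1. (lam k * phi k t) * phi k s) - (\<Sum>k<K2. (mu k * psi k t) * psi k s)"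
    if "s \<in> unit_cube" "t \<in> unit_cube" for s t
    unfolding h_def using g1 g2 that by (simp add: mult_ac)
  have hB: "h s t = (\<Sum>k<K1. (lam k * phi k s) * phi k t) - (\<Sum>k<K2. (mu k * psi k s) * psi k t)"
    if "s \<in> unit_cube" "t \<in> unit_cube" for s t
    unfolding h_def using g1 g2 that by (simp add: mult_ac)
  have cont1: "continuous_on unit_cube (\<lambda>s. h s y)" if y: "y \<in> unit_cube" for y
  proof -
    have "continuous_on unit_cube (\<lambda>s. (\<Sum>k<K1. (lam k * phi k y) * phi k s) - (\<Sum>k<K2. (mu k * psi k y) * psi k s))"
      using phic psic by (intro continuous_intros) auto
    then show ?thesis by (rule continuous_on_eq) (use hA y in auto)
  qed
  have cont2: "continuous_on unit_cube (\<lambda>t. h x t)" if x: "x \<in> unit_cube" for x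
  proof -
    have "continuous_on unit_cube (\<lambda>t. (\<Sum>k<K1. (lam k * phi k x) * phi k t) - (\<Sum>k<K2. (mu k * psi k x) * psi k t))"
      using phic psic by (intro continuous_intros) auto
    then show ?thesis by (rule continuous_on_eq) (use hB x in auto)
  qed
  have sep_first: "\<forall>t\<in>{0..1}. h (upd x d t) y = 0"
    if x: "x \<in> unit_cube" and y: "y \<in> unit_cube" and inf: "infinite {t\<in>{0..1}. h (upd x d t) y = 0}" for x y d
  proof -
    have eq: "h (upd x d t) y = (\<Sum>k<K1. (lam k * phi k y) * phi k (upd x d t)) - (\<Sum>k<K2. (mu k * psi k y) * psi k (upd x d t))"
      if t: "t \<in> {0..1}" for t
      using hA[OF upd_cube[OF x t] y] .
    have "{t\<in>{0..1}. h (upd x d t) y = 0} = {t\<in>{0..1}. (\<Sum>k<K1. (lam k * phi k y) * phi k (upd x d t)) - (\<Sum>k<K2. (mu k * psi k y) * psi k (upd x d t)) = 0}"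
      using eq by auto
    then have inf2: "infinite {t\<in>{0..1}. (\<Sum>k<K1. (lam k * phi k y) * phi k (upd x d t)) - (\<Sum>k<K2. (mu k * psi k y) * psi k (upd x d t)) = 0}"
      using inf by simp
    have "\<forall>t\<in>{0..1}. (\<Sum>k<K1. (lam k * phi k y) * phi k (upd x d t)) - (\<Sum>k<K2. (mu k * psi k y) * psi k (upd x d t)) = 0"
      by (rule comb_sep[where a="\<lambda>k. lam k * phi k y" and b="\<lambda>k. mu k * psi k y", OF A1 A2 x inf2])
    then show ?thesis using eq by simp
  qed
  have sep_second: "\<forall>t\<in>{0..1}. h x (upd y d t) = 0"
    if x: "x \<in> unit_cube" and y: "y \<in> unit_cube" and inf: "infinite {t\<in>{0..1}. h x (upd y d t) = 0}" for x y d
  proof -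
    have eq: "h x (upd y d t) = (\<Sum>k<K1. (lam k * phi k x) * phi k (upd y d t)) - (\<Sum>k<K2. (mu k * psi k x) * psi k (upd y d t))"
      if t: "t \<in> {0..1}" for t
      using hB[OF x upd_cube[OF y t]] .
    have "{t\<in>{0..1}. h x (upd y d t) = 0} = {t\<in>{0..1}. (\<Sum>k<K1. (lam k * phi k x) * phi k (upd y d t)) - (\<Sum>k<K2. (mu k * psi k x) * psi k (upd y d t)) = 0}"
      using eq by auto
    then have inf2: "infinite {t\<in>{0..1}. (\<Sum>k<K1. (lam k * phi k x) * phi k (upd y d t)) - (\<Sum>k<K2. (mu k * psi k x) * psi k (upd y d t)) = 0}"
      using inf by simp
    have "\<forall>t\<in>{0..1}. (\<Sum>k<K1. (lam k * phi k x) * phi k (upd y d t)) - (\<Sum>k<K2. (mu k * psi k x) * psi k (upd y d t)) = 0"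
      by (rule comb_sep[where a="\<lambda>k. lam k * phi k x" and b="\<lambda>k. mu k * psi k x", OF A1 A2 y inf2])
    then show ?thesis using eq by simp
  qed
  have van1: "\<forall>x\<in>unit_cube. h x y = 0"
    if y: "y \<in> unit_cube" and pos: "emeasure lborel {x\<in>unit_cube. h x y = 0} \<noteq> 0" for y
    by (rule inner_lemma[of "\<lambda>s. h s y", OF cont1[OF y] _ pos]) (rule sep_first[OF _ y], assumption+)
  have van2: "\<forall>y\<in>unit_cube. h x y = 0"
    if x: "x \<in> unit_cube" and pos: "emeasure lborel {y\<in>unit_cube. h x y = 0} \<noteq> 0" for x
    by (rule inner_lemma[of "\<lambda>t. h x t", OF cont2[OF x] _ pos]) (rule sep_second[OF x], assumption+)
  show ?thesis
  proof (cases "\<forall>s\<in>unit_cube. \<forall>t\<in>unit_cube. h s t = 0")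
    case True
    show ?thesis
    proof (rule AE_I2, rule impI)
      fix s assume sg: "s \<in> grids M"
      have sc: "s m \<in> unit_cube" if "m \<in> idx M" for m
        using sg cell_sub_cube[OF that] that unfolding grids_def by blast
      have geq: "g1 (s a) (s b) = g2 (s a) (s b)" if "a \<in> idx M" "b \<in> idx M" for a b
        using True sc[OF that(1)] sc[OF that(2)] unfolding h_def by simp
      have eqG: "kernel_tensor M g1 s = kernel_tensor M g2 s"
        unfolding kernel_tensor_def using geq by (auto simp: fun_eq_iff)
      show "((\<lambda>x. kernel_tensor M g1 s x + kernel_tensor M b1 s x)
              = (\<lambda>x. kernel_tensor M g2 s x + kernel_tensor M b2 s x)
            \<longleftrightarrow> kernel_tensor M g1 s = kernel_tensor M g2 s
                \<and> kernel_tensor M b1 s = kernel_tensor M b2 s)"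
        unfolding eqG by (auto simp: fun_eq_iff)
    qed
  next
    case False
    then obtain x0 y0 where x0: "x0 \<in> unit_cube" and y0: "y0 \<in> unit_cube" and h0: "h x0 y0 \<noteq> 0" by blast
    have K1ne: "K1 \<noteq> 0"
    proof
      assume "K1 = 0"
      then have "K2 = 0" using K12 by simp
      then show False using h0 g1 g2 x0 y0 \<open>K1 = 0\<close> unfolding h_def by simp
    qed
    have Mge: "4 \<le> real (M d)" for d
    proof -
      define mx where "mx = max (\<delta>1 d) (\<delta>2 d)"
      have mx: "0 < mx" "mx < 1/2" unfolding mx_def using \<delta>1_range \<delta>2_range by (auto simp: max_def)
      have "Kstar M \<delta>1 \<delta>2 \<noteq> 0" using Kbound K1ne by linarith
      then have "nat \<lfloor>(1/2 - mx) * real (M d) - 1\<rfloor> \<noteq> 0" unfolding Kstar_def mx_def by simp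
      then have "1 \<le> \<lfloor>(1/2 - mx) * real (M d) - 1\<rfloor>" by linarith
      then have "1 \<le> (1/2 - mx) * real (M d) - 1" by linarith
      moreover have "(1/2 - mx) * real (M d) \<le> (1/2) * real (M d)"
        using mx by (intro mult_right_mono) auto
      ultimately show ?thesis by linarith
    qed
    have Mpos: "1 \<le> M d" for d
    proof -
      have "(4::real) \<le> real (M d)" by (rule Mge)
      then show ?thesis by simp
    qed
    define i :: "'d \<Rightarrow> nat" where "i = (\<lambda>d. 1)"
    define j :: "'d \<Rightarrow> nat" where "j = M"
    have iI: "i \<in> idx M" unfolding idx_def i_def using Mpos by (auto simp: PiE_iff)
    have jI: "j \<in> idx M" unfolding idx_def j_def using Mpos by (auto simp: PiE_iff)
    define d0 :: 'd where "d0 = undefined"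
    have ij: "i \<noteq> j"
    proof
      assume "i = j"
      then have "real (i d0) = real (j d0)" by simp
      then show False using Mge[of d0] unfolding i_def j_def by simp
    qed
    have cubeI: "cell M i \<subseteq> unit_cube" "cell M j \<subseteq> unit_cube"
      using cell_sub_cube[OF iI] cell_sub_cube[OF jI] by auto
    have far: "b1 x y = 0 \<and> b2 x y = 0" if x: "x \<in> cell M i" and y: "y \<in> cell M j" for x y
    proof -
      have Mp: "0 < real (M d0)" using Mge[of d0] by simp
      have "x$d0 < 1 / real (M d0)" using x unfolding cell_def i_def by auto
      moreover have "1 / real (M d0) \<le> 1/4" using Mge[of d0] by (intro divide_left_mono) auto
      moreover have "(real (M d0) - 1) / real (M d0) \<le> y$d0" using y unfolding cell_def j_def by auto
      moreover have "(real (M d0) - 1) / real (M d0) = 1 - 1 / real (M d0)"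
        using Mp by (simp add: diff_divide_distrib)
      ultimately have "1/2 \<le> \<bar>x$d0 - y$d0\<bar>" by linarith
      then have "\<delta>1 d0 \<le> \<bar>x$d0 - y$d0\<bar>" "\<delta>2 d0 \<le> \<bar>x$d0 - y$d0\<bar>"
        using \<delta>1_range[rule_format, of d0] \<delta>2_range[rule_format, of d0] by linarith+
      moreover have "x \<in> unit_cube" "y \<in> unit_cube" using x y cubeI by auto
      ultimately show ?thesis using B1(3) B2(3) unfolding banded_def by blast
    qed
    let ?P = "grid_measure M"
    have finI: "finite (idx M)" unfolding idx_def by (intro finite_PiE) auto
    define Hm where "Hm p = indicator (unit_cube \<times> unit_cube) p *\<^sub>R h (fst p) (snd p)
        + (1 - indicator (unit_cube \<times> unit_cube) p)" for p :: "(real^'d) \<times> (real^'d)"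
    have ccb: "unit_cube \<times> unit_cube \<in> sets (borel :: ((real^'d) \<times> (real^'d)) measure)"
      by (intro borel_closed closed_Times closed_unit_cube)
    have hjoint: "continuous_on (unit_cube \<times> unit_cube) (\<lambda>p. h (fst p) (snd p))"
    proof -
      have pf: "continuous_on (unit_cube \<times> unit_cube) (\<lambda>p. phi k (fst p))" if "k < K1" for k
        by (rule continuous_on_compose2[OF phic[OF that] continuous_on_fst[OF continuous_on_id]]) auto
      have ps: "continuous_on (unit_cube \<times> unit_cube) (\<lambda>p. phi k (snd p))" if "k < K1" for k
        by (rule continuous_on_compose2[OF phic[OF that] continuous_on_snd[OF continuous_on_id]]) auto
      have qf: "continuous_on (unit_cube \<times> unit_cube) (\<lambda>p. psi k (fst p))" if "k < K2" for k
        by (rule continuous_on_compose2[OF psic[OF that] continuous_on_fst[OF continuous_on_id]]) auto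
      have qs: "continuous_on (unit_cube \<times> unit_cube) (\<lambda>p. psi k (snd p))" if "k < K2" for k
        by (rule continuous_on_compose2[OF psic[OF that] continuous_on_snd[OF continuous_on_id]]) auto
      have "continuous_on (unit_cube \<times> unit_cube)
          (\<lambda>p. (\<Sum>k<K1. (lam k * phi k (fst p)) * phi k (snd p)) - (\<Sum>k<K2. (mu k * psi k (fst p)) * psi k (snd p)))"
        using pf ps qf qs by (intro continuous_intros) auto
      then show ?thesis by (rule continuous_on_eq) (use hB in \<open>auto simp: mem_Times_iff\<close>)
    qed
    have Hm_m: "Hm \<in> borel_measurable borel"
      unfolding Hm_def using borel_measurable_continuous_on_indicator[OF ccb hjoint]
      by (intro borel_measurable_add borel_measurable_diff) (auto intro: borel_measurable_indicator ccb)
    define Fo where "Fo s = Hm (s i, s j)" for s :: "('d \<Rightarrow> nat) \<Rightarrow> real^'d"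
    have pair_m: "(\<lambda>s. (s i, s j)) \<in> measurable ?P (borel :: ((real^'d) \<times> (real^'d)) measure)"
    proof -
      have "(\<lambda>s. (s i, s j)) \<in> measurable ?P (borel \<Otimes>\<^sub>M borel)"
        unfolding grid_measure_def
        using measurable_component_singleton[OF iI, of "\<lambda>_. lborel"]
              measurable_component_singleton[OF jI, of "\<lambda>_. lborel"]
        by (intro measurable_Pair) auto
      then show ?thesis by (simp add: borel_prod)
    qed
    have Fo_m: "Fo \<in> borel_measurable ?P"
      unfolding Fo_def using measurable_comp[OF pair_m Hm_m] by (simp add: comp_def)
    have Fo_eq: "Fo s = h (s i) (s j)" if "s i \<in> unit_cube" "s j \<in> unit_cube" for s
      unfolding Fo_def Hm_def using that by simp
    define Zs where "Zs = {s\<in>space ?P. s \<in> PiE (idx M) (cell M) \<and> Fo s = 0}"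
    have Zs_m: "Zs \<in> sets ?P"
    proof -
      have "PiE (idx M) (cell M) \<in> sets ?P"
        unfolding grid_measure_def using finI by (intro sets_PiM_I_finite) (auto simp: cell_borel)
      moreover have "{s\<in>space ?P. Fo s = 0} \<in> sets ?P" using Fo_m by measurable
      ultimately have "PiE (idx M) (cell M) \<inter> {s\<in>space ?P. Fo s = 0} \<in> sets ?P" by auto
      moreover have "Zs = PiE (idx M) (cell M) \<inter> {s\<in>space ?P. Fo s = 0}" unfolding Zs_def by auto
      ultimately show ?thesis by simp
    qed
    have Zs0: "emeasure ?P Zs = 0"
    proof (rule ccontr)
      assume ne: "emeasure ?P Zs \<noteq> 0"
      have sep: "sepP lborel (idx M) (cell M) Fo"
        unfolding sepP_def
      proof (intro ballI impI)
        fix m x T t assume m: "m \<in> idx M" and x: "x \<in> PiE (idx M) (cell M)" and T: "T \<in> sets lborel"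
          "T \<subseteq> cell M m" "emeasure lborel T \<noteq> 0" and z: "\<forall>t\<in>T. Fo (x(m:=t)) = 0" and t: "t \<in> cell M m"
        have xc: "x k \<in> unit_cube" if "k \<in> idx M" for k
          using x that cell_sub_cube[OF that] by (auto simp: PiE_iff)
        show "Fo (x(m:=t)) = 0"
        proof (cases "m = i")
          case True
          then have mj: "j \<noteq> m" using ij by simp
          have Fe: "Fo (x(m:=s)) = h s (x j)" if "s \<in> cell M i" for s
            using Fo_eq[of "x(m:=s)"] True mj that cubeI xc[OF jI] by auto
          have "T \<subseteq> {y\<in>unit_cube. h y (x j) = 0}"
          proof
            fix y assume yT: "y \<in> T"
            then have yc: "y \<in> cell M i" using T(2) True by auto
            have "h y (x j) = 0" using z yT Fe[OF yc] True by simp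
            then show "y \<in> {y\<in>unit_cube. h y (x j) = 0}" using yc cubeI by auto
          qed
          moreover have "{y\<in>unit_cube. h y (x j) = 0} \<in> sets lborel"
            using continuous_closed_preimage_constant[OF cont1[OF xc[OF jI]] closed_unit_cube] by simp
          ultimately have "emeasure lborel T \<le> emeasure lborel {y\<in>unit_cube. h y (x j) = 0}"
            by (rule emeasure_mono)
          then have "emeasure lborel {y\<in>unit_cube. h y (x j) = 0} \<noteq> 0" using T(3) by auto
          then have "\<forall>y\<in>unit_cube. h y (x j) = 0" using van1[OF xc[OF jI]] by blast
          then show ?thesis using Fe t True cubeI by auto
        next
          case False
          show ?thesis
          proof (cases "m = j")
            case True
            then have mi: "i \<noteq> m" using ij by simp
            have Fe: "Fo (x(m:=s)) = h (x i) s" if "s \<in> cell M j" for s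
              using Fo_eq[of "x(m:=s)"] True mi that cubeI xc[OF iI] by auto
            have "T \<subseteq> {y\<in>unit_cube. h (x i) y = 0}"
            proof
              fix y assume yT: "y \<in> T"
              then have yc: "y \<in> cell M j" using T(2) True by auto
              have "h (x i) y = 0" using z yT Fe[OF yc] True by simp
              then show "y \<in> {y\<in>unit_cube. h (x i) y = 0}" using yc cubeI by auto
            qed
            moreover have "{y\<in>unit_cube. h (x i) y = 0} \<in> sets lborel"
              using continuous_closed_preimage_constant[OF cont2[OF xc[OF iI]] closed_unit_cube] by simp
            ultimately have "emeasure lborel T \<le> emeasure lborel {y\<in>unit_cube. h (x i) y = 0}"
              by (rule emeasure_mono)
            then have "emeasure lborel {y\<in>unit_cube. h (x i) y = 0} \<noteq> 0" using T(3) by auto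
            then have "\<forall>y\<in>unit_cube. h (x i) y = 0" using van2[OF xc[OF iI]] by blast
            then show ?thesis using Fe t True cubeI by auto
          next
            case False2: False
            have same: "Fo (x(m:=s)) = Fo x" for s
              unfolding Fo_def using False False2 by (metis fun_upd_other)
            have "T \<noteq> {}" using T(3) by auto
            then obtain t0 where "t0 \<in> T" by blast
            then have "Fo x = 0" using z same by metis
            then show ?thesis using same by simp
          qed
        qed
      qed
      have all: "\<forall>s\<in>PiE (idx M) (cell M). Fo s = 0"
        by (rule G_lemma[OF lborel.sigma_finite_measure_axioms finI _ Fo_m[unfolded grid_measure_def] sep
              ne[unfolded Zs_def grid_measure_def]]) (simp add: cell_borel)
      have hz: "h x y = 0" if x: "x \<in> cell M i" and y: "y \<in> cell M j" for x y
      proof -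
        define s where "s = (\<lambda>m\<in>idx M. if m = i then x else if m = j then y else (\<chi> d. (real (m d) - 1) / real (M d)))"
        have "s \<in> PiE (idx M) (cell M)"
          unfolding s_def using x y cell_point by (auto simp: PiE_iff)
        then have "Fo s = 0" using all by blast
        moreover have "s i = x" "s j = y" unfolding s_def using iI jI ij by auto
        ultimately show ?thesis using Fo_eq[of s] x y cubeI by auto
      qed
      have hz2: "\<forall>x\<in>unit_cube. h x y = 0" if y: "y \<in> cell M j" for y
      proof (rule van1)
        show yc: "y \<in> unit_cube" using y cubeI by auto
        have "cell M i \<subseteq> {x\<in>unit_cube. h x y = 0}" using hz y cubeI by auto
        moreover have "{x\<in>unit_cube. h x y = 0} \<in> sets lborel"
          using continuous_closed_preimage_constant[OF cont1[OF yc] closed_unit_cube] by simp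
        ultimately have "emeasure lborel (cell M i) \<le> emeasure lborel {x\<in>unit_cube. h x y = 0}"
          by (rule emeasure_mono)
        then show "emeasure lborel {x\<in>unit_cube. h x y = 0} \<noteq> 0" using cell_pos[OF iI] by auto
      qed
      have "\<forall>y\<in>unit_cube. h x0 y = 0"
      proof (rule van2[OF x0])
        have "cell M j \<subseteq> {y\<in>unit_cube. h x0 y = 0}" using hz2 x0 cubeI by auto
        moreover have "{y\<in>unit_cube. h x0 y = 0} \<in> sets lborel"
          using continuous_closed_preimage_constant[OF cont2[OF x0] closed_unit_cube] by simp
        ultimately have "emeasure lborel (cell M j) \<le> emeasure lborel {y\<in>unit_cube. h x0 y = 0}"
          by (rule emeasure_mono)
        then show "emeasure lborel {y\<in>unit_cube. h x0 y = 0} \<noteq> 0" using cell_pos[OF jI] by auto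
      qed
      then show False using h0 y0 by blast
    qed
    show ?thesis
    proof (rule AE_I'[of Zs])
      show "Zs \<in> null_sets ?P" using Zs0 Zs_m by auto
      show "{s\<in>space ?P. \<not> (s \<in> grids M \<longrightarrow>
           ((\<lambda>x. kernel_tensor M g1 s x + kernel_tensor M b1 s x)
              = (\<lambda>x. kernel_tensor M g2 s x + kernel_tensor M b2 s x)
            \<longleftrightarrow> kernel_tensor M g1 s = kernel_tensor M g2 s
                \<and> kernel_tensor M b1 s = kernel_tensor M b2 s))} \<subseteq> Zs"
      proof (intro subsetI, elim CollectE conjE)
        fix s assume sp: "s \<in> space ?P" and np: "\<not> (s \<in> grids M \<longrightarrow>
           ((\<lambda>x. kernel_tensor M g1 s x + kernel_tensor M b1 s x)
              = (\<lambda>x. kernel_tensor M g2 s x + kernel_tensor M b2 s x)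
            \<longleftrightarrow> kernel_tensor M g1 s = kernel_tensor M g2 s
                \<and> kernel_tensor M b1 s = kernel_tensor M b2 s))"
        have sg: "s \<in> grids M" using np by blast
        have sPi: "s \<in> PiE (idx M) (cell M)"
          using sp sg unfolding grids_def grid_measure_def by (auto simp: space_PiM PiE_iff)
        have si: "s i \<in> cell M i" and sj: "s j \<in> cell M j" using sg iI jI unfolding grids_def by auto
        have "Fo s = 0"
        proof (rule ccontr)
          assume "Fo s \<noteq> 0"
          moreover have "s i \<in> unit_cube" "s j \<in> unit_cube" using si sj cubeI by auto
          ultimately have hne: "h (s i) (s j) \<noteq> 0" using Fo_eq[of s] by simp
          have bz: "b1 (s i) (s j) = 0" "b2 (s i) (s j) = 0" using far[OF si sj] by auto
          have kt: "kernel_tensor M k s (i, j) = k (s i) (s j)" for k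
            using iI jI by (simp add: kernel_tensor_def)
          have n1: "\<not> ((\<lambda>x. kernel_tensor M g1 s x + kernel_tensor M b1 s x)
              = (\<lambda>x. kernel_tensor M g2 s x + kernel_tensor M b2 s x))"
          proof
            assume "(\<lambda>x. kernel_tensor M g1 s x + kernel_tensor M b1 s x)
              = (\<lambda>x. kernel_tensor M g2 s x + kernel_tensor M b2 s x)"
            then have "kernel_tensor M g1 s (i,j) + kernel_tensor M b1 s (i,j)
              = kernel_tensor M g2 s (i,j) + kernel_tensor M b2 s (i,j)" by metis
            then show False using hne bz unfolding kt h_def by simp
          qed
          have n2: "kernel_tensor M g1 s \<noteq> kernel_tensor M g2 s"
          proof
            assume "kernel_tensor M g1 s = kernel_tensor M g2 s"
            then have "kernel_tensor M g1 s (i,j) = kernel_tensor M g2 s (i,j)" by simp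
            then show False using hne unfolding kt h_def by simp
          qed
          show False using np n1 n2 by blast
        qed
        then show "s \<in> Zs" unfolding Zs_def using sp sPi by blast
      qed
    qed
  qed
qed

end
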